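(* Let $n$ be a positive integer and $N = n^2+n+1$. The equation $a^2+ab+b^2 = N$ has a solution in positive integers $(a,b)$ with $(a,b) \notin \{(n,1),(1,n)\}$ if and only if $N$ is neither a prime nor three times a prime. *)

theory Defs
  imports "HOL-Computational_Algebra.Primes"
begin

end

theory Submission
  imports Defs "HOL-Library.Discrete_Functions"
begin


lemma sqb: fixes z :: int assumes "z^2 < 16" shows "\<bar>z\<bar> < 4"
proof (rule ccontr)
  assume "\<not> \<bar>z\<bar> < 4"
  hence "4^2 \<le> \<bar>z\<bar>^2" by (intro power_mono) auto
  thus False using assms by simp
qed

lemma lemB:
  fixes x y m :: int
  assumes "m = 1 \<or> m = 3" "x^2 - x*y + y^2 = m^2"
  shows "(x,y) \<in> {(m,0),(-m,0),(0,m),(0,-m),(m,m),(-m,-m)}"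
proof -
  have e: "(2*x-y)^2 + 3*y^2 = 4*m^2" "(2*y-x)^2 + 3*x^2 = 4*m^2" using assms(2) by (simp_all add: algebra_simps power2_eq_square)
  have "m^2 \<le> 9" using assms(1) by auto
  hence "3*y^2 \<le> 36" "3*x^2 \<le> 36" using e by (smt (verit) zero_le_power2)+
  hence "\<bar>y\<bar>^2 < 4^2" "\<bar>x\<bar>^2 < 4^2" by auto
  hence "\<bar>y\<bar> < 4" "\<bar>x\<bar> < 4" by (simp_all add: sqb)
  hence "x \<in> {-3,-2,-1,0,1,2,3}" "y \<in> {-3,-2,-1,0,1,2,3}" by auto
  then show ?thesis using assms(2) assms(1) by (elim insertE emptyE disjE) (simp_all add: power2_eq_square)
qed

lemma pos_rep:
  fixes x y :: int
  assumes "x^2+x*y+y^2 = M"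
  shows "\<exists>a b. a \<ge> 0 \<and> b \<ge> 0 \<and> a^2+a*b+b^2 = M \<and>
     (x,y) \<in> {(a,b),(-a,-b),(a+b,-b),(b,-a-b),(-a,a+b),(-a-b,a)}"
proof (cases "x \<ge> 0 \<and> y \<ge> 0")
  case True thus ?thesis using assms by (intro exI[of _ x] exI[of _ y]) auto
next
  case F1: False
  show ?thesis
  proof (cases "x \<le> 0 \<and> y \<le> 0")
    case True thus ?thesis using assms by (intro exI[of _ "-x"] exI[of _ "-y"]) (auto simp: algebra_simps power2_eq_square)
  next
    case False
    show ?thesis
    proof (cases "x > 0")
      case xp: True
      hence y: "y < 0" using F1 by auto
      show ?thesis
      proof (cases "x + y \<ge> 0")
        case True thus ?thesis using assms xp y by (intro exI[of _ "x+y"] exI[of _ "-y"]) (auto simp: algebra_simps power2_eq_square)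
      next
        case False thus ?thesis using assms xp y by (intro exI[of _ "-(x+y)"] exI[of _ "x"]) (auto simp: algebra_simps power2_eq_square)
      qed
    next
      case xn: False
      hence x: "x < 0" "y > 0" using F1 False by auto
      show ?thesis
      proof (cases "x + y \<ge> 0")
        case True thus ?thesis using assms x by (intro exI[of _ "-x"] exI[of _ "x+y"]) (auto simp: algebra_simps power2_eq_square)
      next
        case False thus ?thesis using assms x by (intro exI[of _ "y"] exI[of _ "-(x+y)"]) (auto simp: algebra_simps power2_eq_square)
      qed
    qed
  qed
qed



lemma thue:
  fixes m t :: int
  assumes mpos: "m > 0" and modd: "odd m" and mdvd: "m dvd t^2+t+1" and nsq: "\<forall>K. K^2 \<noteq> m"
  shows "\<exists>x y. x^2+x*y+y^2 = m \<and> m dvd x - t*y"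
proof -
  define K where "K = int (floor_sqrt (nat m))"
  have K0: "K \<ge> 0" unfolding K_def by simp
  have "int ((floor_sqrt (nat m))^2) \<le> int (nat m)" using floor_sqrt_power2_le by (metis of_nat_le_iff)
  hence K1: "K^2 \<le> m" using mpos unfolding K_def by simp
  have "int (nat m) < int ((Suc (floor_sqrt (nat m)))^2)" using Suc_floor_sqrt_power2_gt by (metis of_nat_less_iff)
  hence K2: "m < (K+1)^2" using mpos unfolding K_def by (simp add: add.commute)
  have K3: "K^2 < m" using K1 nsq by (metis order_le_less)
  define A where "A = {0..K} \<times> {0..K}"
  define g where "g = (\<lambda>(x,y). (x - t*y) mod m)"
  have "g ` A \<subseteq> {0..<m}" unfolding g_def using mpos by auto
  hence "card (g ` A) \<le> card {0..<m}" by (intro card_mono) auto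
  also have "card {0..<m} = nat m" by simp
  also have "nat m < card A"
  proof -
    have "card A = nat (K+1) * nat (K+1)" unfolding A_def by (simp add: card_cartesian_product)
    also have "\<dots> = nat ((K+1)^2)" using K0 by (simp add: power2_eq_square nat_mult_distrib)
    finally show ?thesis using K2 K0 mpos by simp
  qed
  finally have "\<not> inj_on g A" by (intro pigeonhole) auto
  then obtain p1 p2 where p: "p1 \<in> A" "p2 \<in> A" "p1 \<noteq> p2" "g p1 = g p2" unfolding inj_on_def by blast
  obtain x1 y1 x2 y2 where pp: "p1 = (x1,y1)" "p2 = (x2,y2)" by (cases p1, cases p2) auto
  define dx where "dx = x1 - x2"
  define dy where "dy = y1 - y2"
  have b: "\<bar>dx\<bar> \<le> K" "\<bar>dy\<bar> \<le> K" using p pp unfolding A_def dx_def dy_def by auto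
  have nz: "dx \<noteq> 0 \<or> dy \<noteq> 0" using p pp unfolding dx_def dy_def by auto
  have dv: "m dvd dx - t*dy"
  proof -
    have "(x1 - t*y1) mod m = (x2 - t*y2) mod m" using p pp unfolding g_def by simp
    hence "m dvd (x1 - t*y1) - (x2 - t*y2)" by (simp add: mod_eq_dvd_iff)
    moreover have "(x1 - t*y1) - (x2 - t*y2) = dx - t*dy" unfolding dx_def dy_def by (simp add: algebra_simps)
    ultimately show ?thesis by simp
  qed
  define f where "f = dx^2+dx*dy+dy^2"
  have "f = dy^2*(t^2+t+1) + (dx - t*dy)*(dx + t*dy + dy)" unfolding f_def by (simp add: algebra_simps power2_eq_square)
  hence mf: "m dvd f" using dv mdvd by simp
  have "4*f = (2*dx+dy)^2 + 3*dy^2" unfolding f_def by (simp add: algebra_simps power2_eq_square)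
  moreover have "(2*dx+dy)^2 + 3*dy^2 > 0" using nz by (smt (verit) power2_less_eq_zero_iff zero_le_power2)
  ultimately have fpos: "f > 0" by simp
  have "\<bar>dx\<bar>^2 \<le> K^2" "\<bar>dy\<bar>^2 \<le> K^2" using b by (intro power_mono; simp)+
  hence "dx^2 \<le> K^2" "dy^2 \<le> K^2" by simp_all
  moreover have "dx*dy \<le> K^2"
  proof -
    have "dx*dy \<le> \<bar>dx\<bar>*\<bar>dy\<bar>" by (metis abs_ge_self abs_mult)
    also have "\<dots> \<le> K*K" using b by (intro mult_mono) auto
    finally show ?thesis by (simp add: power2_eq_square)
  qed
  ultimately have "f \<le> 3*K^2" unfolding f_def by simp
  hence f3: "f < 3*m" using K3 by simp
  obtain k where k: "f = m*k" using mf by blast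
  have "k > 0" using k fpos mpos by (metis zero_less_mult_pos)
  moreover have "m*k < m*3" using k f3 by (simp add: mult.commute)
  hence "k < 3" using mpos by simp
  ultimately have "k = 1 \<or> k = 2" by auto
  moreover have "k \<noteq> 2"
  proof
    assume "k = 2"
    hence "even f" using k by simp
    hence "even dx \<and> even dy" unfolding f_def by (auto simp: power2_eq_square)
    then obtain a b where ab: "dx = 2*a" "dy = 2*b" by (auto elim!: evenE)
    have "f = 2*(2*(a^2+a*b+b^2))" unfolding f_def ab by (simp add: algebra_simps power2_eq_square)
    hence "m = 2*(a^2+a*b+b^2)" using k \<open>k=2\<close> by simp
    thus False using modd by simp
  qed
  ultimately have "f = m" using k by simp
  thus ?thesis using dv unfolding f_def by blast
qed



lemma uniq:
  fixes a b n P m N :: int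
  assumes ap: "a>0" and bp: "b>0" and np: "n>0" and f: "a^2+a*b+b^2 = N" and Nd: "N = n^2+n+1"
    and Pp: "prime P" and NmP: "N = m*P" and m13: "m=1 \<or> m=3"
  shows "(a,b) = (n,1) \<or> (a,b) = (1,n)"
proof -
  define v where "v = a - b*n"
  define w where "w = a + b*n + b"
  define u where "u = a*n + a + b"
  define s where "s = a*n - b"
  have N0: "N > 0" proof - have "n^2 \<ge> 0" by simp thus ?thesis using Nd np by linarith qed
  have P0: "P > 0" using Pp prime_gt_0_int by blast
  have "v*w = (a^2+a*b+b^2) - b^2*(n^2+n+1)" unfolding v_def w_def by (simp add: algebra_simps power2_eq_square)
  hence vw: "v*w = N*(1-b^2)" using f Nd by (simp add: algebra_simps)
  have "u^2 - u*v + v^2 = (a^2+a*b+b^2)*(n^2+n+1)" unfolding u_def v_def by (simp add: algebra_simps power2_eq_square)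
  hence uv: "u^2 - u*v + v^2 = N*N" using f Nd by simp
  have "s^2 + s*w + w^2 = (a^2+a*b+b^2)*(n^2+n+1)" unfolding s_def w_def by (simp add: algebra_simps power2_eq_square)
  hence sw: "s^2 + s*w + w^2 = N*N" using f Nd by simp
  have NN: "N*N = (m*m)*(P*P)" using NmP by simp
  have "P dvd v*w" using vw NmP by simp
  hence "P dvd v \<or> P dvd w" using Pp prime_dvd_mult_iff by blast
  thus ?thesis
  proof
    assume "P dvd v"
    then obtain v' where v': "v = P*v'" by blast
    have "u^2 = N*N + u*v - v^2" using uv by simp
    hence "P dvd u^2" using v' NmP by (simp add: power2_eq_square)
    hence "P dvd u" using Pp prime_dvd_power by blast
    then obtain u' where u': "u = P*u'" by blast
    have "(P*P)*(u'^2 - u'*v' + v'^2) = (P*P)*m^2" using uv NN u' v' by (simp add: algebra_simps power2_eq_square)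
    hence e: "u'^2 - u'*v' + v'^2 = m^2" using P0 by simp
    have "u > 0" unfolding u_def using ap bp np by (simp add: add_pos_pos)
    hence "u' > 0" using u' P0 by (simp add: zero_less_mult_iff)
    hence "(u',v') = (m,0) \<or> (u',v') = (m,m)" using lemB[OF m13 e] m13 by auto
    thus ?thesis
    proof
      assume "(u',v') = (m,0)"
      hence "a = b*n" using v' unfolding v_def by simp
      hence "b^2 * N = N" using f Nd by (simp add: algebra_simps power2_eq_square)
      hence "b^2 = 1" using N0 by simp
      hence "b = 1" using bp by (simp add: power2_eq_1_iff)
      thus ?thesis using \<open>a = b*n\<close> by simp
    next
      assume "(u',v') = (m,m)"
      hence "u = v" using u' v' by simp
      hence "a*n + b + b*n = 0" unfolding u_def v_def by (simp add: algebra_simps)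
      moreover have "a*n + b + b*n > 0" using ap bp np by (simp add: add_pos_pos)
      ultimately show ?thesis by simp
    qed
  next
    assume "P dvd w"
    then obtain w' where w': "w = P*w'" by blast
    have "s^2 = N*N - s*w - w^2" using sw by simp
    hence "P dvd s^2" using w' NmP by (simp add: power2_eq_square)
    hence "P dvd s" using Pp prime_dvd_power by blast
    then obtain s' where s': "s = P*s'" by blast
    have "(P*P)*(s'^2 - s'*(-w') + (-w')^2) = (P*P)*m^2" using sw NN s' w' by (simp add: algebra_simps power2_eq_square)
    hence e: "s'^2 - s'*(-w') + (-w')^2 = m^2" using P0 by simp
    have "w > 0" unfolding w_def using ap bp np by (simp add: add_pos_pos)
    hence "w' > 0" using w' P0 by (simp add: zero_less_mult_iff)
    hence "(s',-w') = (0,-m) \<or> (s',-w') = (-m,-m)" using lemB[OF m13 e] m13 by auto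
    thus ?thesis
    proof
      assume "(s',-w') = (0,-m)"
      hence "b = a*n" using s' unfolding s_def by simp
      hence "a^2 * N = N" using f Nd by (simp add: algebra_simps power2_eq_square)
      hence "a^2 = 1" using N0 by simp
      hence "a = 1" using ap by (simp add: power2_eq_1_iff)
      thus ?thesis using \<open>b = a*n\<close> by simp
    next
      assume "(s',-w') = (-m,-m)"
      hence "s = -N" using s' NmP by simp
      hence "b = a*n + N" unfolding s_def by simp
      hence "b > N" using ap np by (simp add: add_pos_pos)
      moreover have "b \<le> b^2" using bp by (simp add: power2_eq_square)
      moreover have "b^2 \<le> N" proof - have "a*b > 0" "a^2 \<ge> 0" using ap bp by simp_all thus ?thesis using f by linarith qed
      ultimately show ?thesis by simp
    qed
  qed
qed



lemma to3:
  fixes q n E L c k :: int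
  assumes "q dvd n^2+n+1" "q dvd E" "L = c*E + k*(n^2+n+1)" "L = 2*n+1 \<or> L = n - 1 \<or> L = n+2"
  shows "q dvd 3"
proof -
  have qL: "q dvd L" using assms(1,2,3) by simp
  from assms(4) show ?thesis
  proof (elim disjE)
    assume L: "L = 2*n+1"
    have "3 = 4*(n^2+n+1) - (2*n+1)*(2*n+1)" by (simp add: algebra_simps power2_eq_square)
    hence "3 = 4*(n^2+n+1) - L*L" using L by simp
    thus ?thesis using qL assms(1) by (metis dvd_diff dvd_mult dvd_mult2)
  next
    assume L: "L = n-1"
    have "3 = (n^2+n+1) - (n-1)*(n+2)" by (simp add: algebra_simps power2_eq_square)
    hence "3 = (n^2+n+1) - L*(n+2)" using L by simp
    thus ?thesis using qL assms(1) by (metis dvd_diff dvd_mult2)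
  next
    assume L: "L = n+2"
    have "3 = (n^2+n+1) - (n+2)*(n-1)" by (simp add: algebra_simps power2_eq_square)
    hence "3 = (n^2+n+1) - L*(n-1)" using L by simp
    thus ?thesis using qL assms(1) by (metis dvd_diff dvd_mult2)
  qed
qed

lemma caseP:
  fixes p n T x y :: int
  assumes h1: "p dvd n^2+n+1" and h3: "\<not> p dvd 3" and hT: "p dvd T + 1 + n" and hx: "p dvd x - T*y"
  shows "(x,y) \<notin> {(n,1),(-n,-1),(1,-n-1),(-n-1,n),(n+1,-n),(-1,n+1)}"
proof
  have "p dvd (x - T*y) + (T+1+n)*y" using hT hx by (simp add: dvd_add)
  moreover have "(x - T*y) + (T+1+n)*y = x - (-1-n)*y" by (simp add: algebra_simps)
  ultimately have hE: "p dvd x - (-1-n)*y" by metis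
  assume "(x,y) \<in> {(n,1),(-n,-1),(1,-n-1),(-n-1,n),(n+1,-n),(-1,n+1)}"
  hence "p dvd 3"
  proof (elim insertE emptyE)
    assume "(x,y) = (n,1)" thus ?thesis using to3[OF h1 hE, of "2*n+1" 1 0] by (simp add: algebra_simps)
  next
    assume "(x,y) = (-n,-1)" thus ?thesis using to3[OF h1 hE, of "2*n+1" "-1" 0] by (simp add: algebra_simps)
  next
    assume "(x,y) = (1,-n-1)" hence xy: "x = 1" "y = -n-1" by auto
    show ?thesis using to3[OF h1 hE[unfolded xy], of "n - 1" "-1" "-1"] by (simp add: algebra_simps power2_eq_square)
  next
    assume "(x,y) = (-n-1,n)" thus ?thesis using to3[OF h1 hE, of "n + 2" "-1" "1"] by (simp add: algebra_simps power2_eq_square)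
  next
    assume "(x,y) = (n+1,-n)" thus ?thesis using to3[OF h1 hE, of "n + 2" "1" "1"] by (simp add: algebra_simps power2_eq_square)
  next
    assume "(x,y) = (-1,n+1)" thus ?thesis using to3[OF h1 hE, of "n - 1" "1" "-1"] by (simp add: algebra_simps power2_eq_square)
  qed
  thus False using h3 by simp
qed

lemma caseR:
  fixes p n T x y :: int
  assumes h1: "p dvd n^2+n+1" and h3: "\<not> p dvd 3" and hT: "p dvd T - n" and hx: "p dvd x - T*y"
  shows "(x,y) \<notin> {(n+1,-1),(-n,n+1),(1,n),(-1,-n),(n,-n-1),(-n-1,1)}"
proof
  have "p dvd (x - T*y) + (T-n)*y" using hT hx by (simp add: dvd_add)
  moreover have "(x - T*y) + (T-n)*y = x - n*y" by (simp add: algebra_simps)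
  ultimately have hE: "p dvd x - n*y" by metis
  assume "(x,y) \<in> {(n+1,-1),(-n,n+1),(1,n),(-1,-n),(n,-n-1),(-n-1,1)}"
  hence "p dvd 3"
  proof (elim insertE emptyE)
    assume "(x,y) = (n+1,-1)" thus ?thesis using to3[OF h1 hE, of "2*n+1" 1 0] by (simp add: algebra_simps)
  next
    assume "(x,y) = (-n,n+1)" thus ?thesis using to3[OF h1 hE, of "n - 1" "-1" "-1"] by (simp add: algebra_simps power2_eq_square)
  next
    assume "(x,y) = (1,n)" thus ?thesis using to3[OF h1 hE, of "n + 2" "1" "1"] by (simp add: algebra_simps power2_eq_square)
  next
    assume "(x,y) = (-1,-n)" thus ?thesis using to3[OF h1 hE, of "n + 2" "-1" "1"] by (simp add: algebra_simps power2_eq_square)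
  next
    assume "(x,y) = (n,-n-1)" hence xy: "x = n" "y = -n-1" by auto
    show ?thesis using to3[OF h1 hE[unfolded xy], of "n - 1" "1" "-1"] by (simp add: algebra_simps power2_eq_square)
  next
    assume "(x,y) = (-n-1,1)" thus ?thesis using to3[OF h1 hE, of "2*n+1" "-1" 0] by (simp add: algebra_simps)
  qed
  thus False using h3 by simp
qed



lemma nsq:
  fixes n :: nat assumes "n > 0"
  shows "\<forall>K::int. K^2 \<noteq> int (n^2+n+1)"
proof (intro allI notI)
  fix K :: int assume K: "K^2 = int (n^2+n+1)"
  define k where "k = \<bar>K\<bar>"
  have k0: "k \<ge> 0" unfolding k_def by simp
  have kk: "k^2 = int n^2 + int n + 1" using K unfolding k_def by simp
  have "(int n)^2 < k^2" using kk by simp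
  hence "int n < k" using k0 power_less_imp_less_base by blast
  hence "int n + 1 \<le> k" by simp
  hence "(int n+1)^2 \<le> k^2" by (intro power_mono) auto
  thus False using kk assms by (simp add: power2_eq_square algebra_simps)
qed

lemma to_nat:
  fixes n :: nat and a b :: int
  assumes np: "n>0" and "a \<ge> 0" "b \<ge> 0" and f: "a^2+a*b+b^2 = int (n^2+n+1)"
    and "(a,b) \<noteq> (int n,1)" "(a,b) \<noteq> (1, int n)"
  shows "\<exists>a b :: nat. a > 0 \<and> b > 0 \<and> a^2 + a*b + b^2 = n^2 + n + 1
            \<and> (a, b) \<notin> {(n, 1), (1, n)}"
proof -
  have "a \<noteq> 0" using nsq[OF np] f by force
  moreover have "b \<noteq> 0" using nsq[OF np] f by force
  moreover have "int ((nat a)^2 + nat a * nat b + (nat b)^2) = int (n^2+n+1)"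
    using f assms(2,3) by simp
  hence "(nat a)^2 + nat a * nat b + (nat b)^2 = n^2+n+1" by (simp only: of_nat_eq_iff)
  moreover have "(nat a, nat b) \<notin> {(n, 1), (1, n)}" using assms(2,3,5,6) by auto
  ultimately show ?thesis using assms(2,3) by (intro exI[of _ "nat a"] exI[of _ "nat b"]) auto
qed

lemma six_dvd:
  fixes s x y a b :: int
  assumes "(s*x,s*y) \<in> {(a,b),(-a,-b),(a+b,-b),(b,-a-b),(-a,a+b),(-a-b,a)}"
  shows "s dvd a \<and> s dvd b"
  using assms
proof (elim insertE emptyE)
  assume "(s*x,s*y) = (-a,-b)" hence "a = s*(-x)" "b = s*(-y)" by (auto simp: algebra_simps)
  thus ?thesis by simp
next
  assume "(s*x,s*y) = (a+b,-b)" hence "a = s*(x+y)" "b = s*(-y)" by (auto simp: algebra_simps)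
  thus ?thesis by simp
next
  assume "(s*x,s*y) = (b,-a-b)" hence "a = s*(-x-y)" "b = s*x" by (auto simp: algebra_simps)
  thus ?thesis by simp
next
  assume "(s*x,s*y) = (-a,a+b)" hence "a = s*(-x)" "b = s*(x+y)" by (auto simp: algebra_simps)
  thus ?thesis by simp
next
  assume "(s*x,s*y) = (-a-b,a)" hence "a = s*y" "b = s*(-x-y)" by (auto simp: algebra_simps)
  thus ?thesis by simp
qed (auto simp: algebra_simps)

theorem theorem4:
  fixes n :: nat
  assumes "n > 0"
  shows "(\<exists>a b :: nat. a > 0 \<and> b > 0 \<and> a^2 + a*b + b^2 = n^2 + n + 1
            \<and> (a, b) \<notin> {(n, 1), (1, n)})
         \<longleftrightarrow> \<not> prime (n^2 + n + 1) \<and> \<not> (\<exists>p. prime p \<and> n^2 + n + 1 = 3 * p)"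
proof
  assume "\<exists>a b :: nat. a > 0 \<and> b > 0 \<and> a^2 + a*b + b^2 = n^2 + n + 1
            \<and> (a, b) \<notin> {(n, 1), (1, n)}"
  then obtain a b :: nat where ab: "a > 0" "b > 0" "a^2 + a*b + b^2 = n^2 + n + 1"
     "(a, b) \<notin> {(n, 1), (1, n)}" by blast
  have fi: "int a^2 + int a * int b + int b^2 = int (n^2+n+1)" using ab(3) by (metis of_nat_add of_nat_mult of_nat_power)
  have ni: "int (n^2+n+1) = int n^2 + int n + 1" by simp
  have ne: "(int a, int b) \<noteq> (int n, 1) \<and> (int a, int b) \<noteq> (1, int n)" using ab(4) by auto
  show "\<not> prime (n^2 + n + 1) \<and> \<not> (\<exists>p. prime p \<and> n^2 + n + 1 = 3 * p)"
  proof (intro conjI notI)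
    assume "prime (n^2+n+1)"
    hence "prime (int (n^2+n+1))" using prime_nat_int_transfer by blast
    from uniq[OF _ _ _ fi ni this, of 1] ab assms ne show False by simp
  next
    assume "\<exists>p. prime p \<and> n^2 + n + 1 = 3 * p"
    then obtain p where p: "prime p" "n^2+n+1 = 3*p" by blast
    hence pi: "prime (int p)" by simp
    have "int (n^2+n+1) = 3 * int p" using p(2) by simp
    from uniq[OF _ _ _ fi ni pi this] ab assms ne show False by simp
  qed
next
  assume R: "\<not> prime (n^2 + n + 1) \<and> \<not> (\<exists>p. prime p \<and> n^2 + n + 1 = 3 * p)"
  define N where "N = n^2+n+1"
  have np: "n > 0" by fact
  have Ni: "int N = int n^2 + int n + 1" unfolding N_def by simp
  have N3: "N \<ge> 3" proof - have "n^2 \<ge> 1" using np by simp thus ?thesis unfolding N_def using np by linarith qed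
  have oddN: "odd N" unfolding N_def by (simp add: power2_eq_square)
  have nsqN: "\<forall>K::int. K^2 \<noteq> int N" using nsq[OF np] unfolding N_def by simp
  have notprime: "\<not> prime N" and not3p: "\<not> (\<exists>p. prime p \<and> N = 3*p)" using R unfolding N_def by auto
  show "\<exists>a b :: nat. a > 0 \<and> b > 0 \<and> a^2 + a*b + b^2 = n^2 + n + 1
            \<and> (a, b) \<notin> {(n, 1), (1, n)}"
  proof (cases "\<exists>s::nat. s > 1 \<and> s^2 dvd N")
    case True
    then obtain s :: nat where s: "s > 1" "s^2 dvd N" by blast
    then obtain m :: nat where m: "N = s^2 * m" by blast
    have m0: "int m > 0" using m N3 by (cases m) auto
    have oddm: "odd (int m)" using oddN m by simp
    have mdvd: "int m dvd (int n)^2 + int n + 1"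
    proof -
      have "int N = int m * (int s)^2" using m by simp
      thus ?thesis unfolding Ni by simp
    qed
    have msq: "\<forall>K::int. K^2 \<noteq> int m"
    proof (intro allI notI)
      fix K :: int assume "K^2 = int m"
      hence "(K * int s)^2 = int N" using m by (simp add: power_mult_distrib)
      thus False using nsqN by blast
    qed
    obtain x y where xy: "x^2+x*y+y^2 = int m" using thue[OF m0 oddm mdvd msq] by blast
    have "(int s*x)^2 + (int s*x)*(int s*y) + (int s*y)^2 = (int s)^2*(x^2+x*y+y^2)"
      by (simp add: algebra_simps power2_eq_square)
    also have "\<dots> = int N" using xy m by simp
    finally obtain a b where ab: "a \<ge> 0" "b \<ge> 0" "a^2+a*b+b^2 = int N"
      "(int s*x,int s*y) \<in> {(a,b),(-a,-b),(a+b,-b),(b,-a-b),(-a,a+b),(-a-b,a)}"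
      using pos_rep by blast
    have sd: "int s dvd a \<and> int s dvd b" using six_dvd[OF ab(4)] .
    have "(a,b) \<noteq> (int n,1)" using sd s(1) by auto
    moreover have "(a,b) \<noteq> (1,int n)" using sd s(1) by auto
    ultimately show ?thesis using to_nat[OF np ab(1,2)] ab(3) unfolding N_def by blast
  next
    case False
    have nsqf: "\<And>s. s > 1 \<Longrightarrow> \<not> s^2 dvd N" using False by blast
    obtain p r :: nat where pr: "prime p" "p \<noteq> 3" "N = p*r" "r \<noteq> 1" "r \<noteq> 3" "\<not> p dvd r"
    proof (cases "3 dvd N")
      case False
      have "N \<noteq> 1" using N3 by simp
      then obtain p where p: "prime p" "p dvd N" using prime_factor_nat by blast
      then obtain r where r: "N = p*r" by blast
      show ?thesis
      proof (rule that[OF p(1) _ r])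
        show "p \<noteq> 3" proof assume "p = 3" thus False using False p(2) by simp qed
        show "r \<noteq> 1" proof assume "r = 1" hence "N = p" using r by simp thus False using notprime p(1) by simp qed
        show "r \<noteq> 3" proof assume "r = 3" hence "3 dvd N" using r by simp thus False using False by simp qed
        show "\<not> p dvd r"
        proof
          assume "p dvd r" hence "p^2 dvd N" using r by (simp add: power2_eq_square)
          thus False using nsqf[of p] p(1) prime_gt_1_nat by blast
        qed
      qed
    next
      case True
      then obtain M where M: "N = 3*M" by blast
      have "M \<noteq> 1" proof assume "M = 1" hence "N = 3" using M by simp thus False using notprime by simp qed
      then obtain p where p: "prime p" "p dvd M" using prime_factor_nat by blast
      then obtain j where j: "M = p*j" by blast
      have p3: "p \<noteq> 3"
      proof
        assume "p = 3" hence "3^2 dvd N" using M j by (simp add: power2_eq_square)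
        thus False using nsqf[of 3] by simp
      qed
      have j1: "j \<noteq> 1" proof assume "j = 1" hence "N = 3*p" using j M by simp thus False using not3p p(1) by blast qed
      show ?thesis
      proof (rule that[OF p(1) p3, of "3*j"])
        show "N = p * (3*j)" using M j by simp
        show "3*j \<noteq> 1" by simp
        show "3*j \<noteq> 3" using j1 by simp
        show "\<not> p dvd 3*j"
        proof
          assume "p dvd 3*j" hence "p^2 dvd N" using M j by (simp add: power2_eq_square)
          thus False using nsqf[of p] p(1) prime_gt_1_nat by blast
        qed
      qed
    qed
    have cop: "coprime (int p) (int r)" using prime_imp_coprime[OF pr(1) pr(6)] by simp
    obtain u v where uv: "u * int p + v * int r = 1" using bezout_int[of "int p" "int r"] cop by auto
    define T where "T = (-1 - int n)*v*int r + int n*u*int p"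
    have "T + 1 + int n = T + (1 + int n)*(u * int p + v * int r)" using uv by simp
    also have "\<dots> = int p * (u*(2*int n+1))" unfolding T_def by (simp add: algebra_simps)
    finally have pT: "int p dvd T + 1 + int n" by simp
    have "T - int n = T - int n*(u * int p + v * int r)" using uv by simp
    also have "\<dots> = int r * (-v*(2*int n+1))" unfolding T_def by (simp add: algebra_simps)
    finally have rT: "int r dvd T - int n" by simp
    have TT: "T^2+T+1 = (int n^2 + int n + 1) + (T+1+int n)*(T - int n)" by (simp add: algebra_simps power2_eq_square)
    have "int p dvd T^2+T+1" "int r dvd T^2+T+1" using pT rT unfolding TT Ni[symmetric] pr(3) by simp_all
    hence "int p * int r dvd T^2+T+1" using cop by (simp add: divides_mult)
    hence Ndvd: "int N dvd T^2+T+1" using pr(3) by simp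
    have N0: "int N > 0" using N3 by simp
    obtain x y where xy: "x^2+x*y+y^2 = int N" "int N dvd x - T*y" using thue[OF N0 _ Ndvd nsqN] oddN by auto
    have px: "int p dvd x - T*y" "int r dvd x - T*y" using xy(2) pr(3) by (auto intro: dvd_mult_left dvd_mult_right)
    obtain a b where ab: "a \<ge> 0" "b \<ge> 0" "a^2+a*b+b^2 = int N"
      "(x,y) \<in> {(a,b),(-a,-b),(a+b,-b),(b,-a-b),(-a,a+b),(-a-b,a)}"
      using pos_rep[OF xy(1)] by blast
    have "int N = int p * int r" using pr(3) by simp
    hence pN: "int p dvd int n^2 + int n + 1" "int r dvd int n^2 + int n + 1" unfolding Ni by simp_all
    have p3: "\<not> int p dvd 3"
    proof
      assume "int p dvd 3" hence "int p dvd int 3" by simp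
      hence "p dvd 3" by (simp only: of_nat_dvd_iff)
      moreover have "prime (3::nat)" by simp
      ultimately show False using pr(1,2) prime_nat_iff[of 3] prime_gt_1_nat[of p] by auto
    qed
    have r3: "\<not> int r dvd 3"
    proof
      assume "int r dvd 3" hence "int r dvd int 3" by simp
      hence "r dvd 3" by (simp only: of_nat_dvd_iff)
      moreover have "prime (3::nat)" by simp
      ultimately show False using pr(4,5) prime_nat_iff by blast
    qed
    note cP = caseP[OF pN(1) p3 pT px(1)] and cR = caseR[OF pN(2) r3 rT px(2)]
    have "(a,b) \<noteq> (int n,1)"
    proof
      assume "(a,b) = (int n,1)"
      hence "a = int n" "b = 1" by simp_all
      hence "(x,y) \<in> {(int n,1),(-int n,-1),(int n+1,-1),(1,-int n-1),(-int n,int n+1),(-int n-1,int n)}"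
        using ab(4) by simp
      thus False
      proof (elim insertE emptyE)
      qed (use cP cR in simp_all)
    qed
    moreover have "(a,b) \<noteq> (1,int n)"
    proof
      assume "(a,b) = (1,int n)"
      hence "a = 1" "b = int n" by simp_all
      hence "(x,y) \<in> {(1,int n),(-1,-int n),(1+int n,-int n),(int n,-1-int n),(-1,1+int n),(-1-int n,1)}"
        using ab(4) by simp
      thus False
      proof (elim insertE emptyE)
        assume "(x,y) = (1+int n,-int n)" hence "(x,y) = (int n+1,-int n)" by simp
        thus False using cP by blast
      next
        assume "(x,y) = (int n,-1-int n)" hence "(x,y) = (int n,-int n-1)" by simp
        thus False using cR by blast
      next
        assume "(x,y) = (-1,1+int n)" hence "(x,y) = (-1,int n+1)" by simp
        thus False using cP by blast
      next
        assume "(x,y) = (-1-int n,1)" hence "(x,y) = (-int n-1,1)" by simp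
        thus False using cR by blast
      qed (use cP cR in simp_all)
    qed
    ultimately show ?thesis using to_nat[OF np ab(1,2)] ab(3) unfolding N_def by blast
  qed
qed


end
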